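(* Let $\Gamma$ be a finitely generated discrete group with finite symmetric generating set $Q$ and let $Z\subseteq\mathrm{Sub}(\Gamma)$ be a uniformly recurrent subgroup. The map $q:Z\rtimes\Gamma\to\mathcal{G}$, $q(L,\gamma)=(L,\gamma L)$ for $L\in Z$, $\gamma\in\Gamma$, is a continuous, open and surjective groupoid homomorphism. In particular, $\mathcal{G}$ is a quotient of the transformation groupoid $Z\rtimes\Gamma$.
   Context: Word length $l(\gamma)$ is taken with respect to $Q$. $\mathrm{Sub}(\Gamma)$ is the space of subgroups of $\Gamma$ with the topology of pointwise convergence of indicator functions, with $\Gamma$ acting by conjugation $\gamma.L=\gamma L\gamma^{-1}$. A uniformly recurrent subgroup (URS) is a nonempty closed $\Gamma$-invariant subset $Z\subseteq\mathrm{Sub}(\Gamma)$ on which every $\Gamma$-orbit is dense. For $L\le\Gamma$, the Schreier graph $S(L)$ is the rooted labeled graph with vertex set $\Gamma/L$, root $L$, and for each $\gamma L$ and $q\in Q$ an edge from $\gamma L$ to $q\gamma L$ labeled $q$; $B_N(S(L),L)$ is the ball of radius $N$ (path metric) around the root. Root-label isomorphism means graph isomorphism preserving roots and labels. Transformation groupoid $Z\rtimes\Gamma$: the space $Z\times\Gamma$ with product topology ($\Gamma$ discrete), $r(L,\gamma)=L$, $s(L,\gamma)=\gamma L\gamma^{-1}$, product $(L,\gamma)(\gamma L\gamma^{-1},\eta)=(L,\eta\gamma)$. The groupoid $\mathcal{G}$: as a set, $\mathcal{G}=\{(L,c): L\in Z,\ c\in\Gamma/L\}$, with $r(L,\gamma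 L)=L$, $s(L,\gamma L)=\gamma L\gamma^{-1}$, product $(L,\gamma L)(\gamma L\gamma^{-1},\eta\gamma L\gamma^{-1})=(L,\eta\gamma L)$, inverse $(L,\gamma L)^{-1}=(\gamma L\gamma^{-1},\gamma^{-1}\cdot\gamma L\gamma^{-1})$, and units $(L,L)$. Its topology has as basis the sets $U_{L,N,\gamma}=\{(L',\gamma L'): L'\in Z,\ (B_N(S(L'),L'),L')\text{ root-label isomorphic to }(B_N(S(L),L),L)\}$ for $L\in Z$, $N\in\mathbb{N}$, $\gamma\in\Gamma$ with $l(\gamma)\le N$. *)

theory Defs
  imports "HOL-Analysis.Analysis"
begin

text \<open>The group Gamma is a type 'g of class group_add (written additively, not
necessarily commutative); it is discrete.  Subgroups are sets of elements.\<close>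

definition is_subgroup :: "'g::group_add set \<Rightarrow> bool" where
  "is_subgroup L \<longleftrightarrow> 0 \<in> L \<and> (\<forall>x\<in>L. \<forall>y\<in>L. x + y \<in> L) \<and> (\<forall>x\<in>L. - x \<in> L)"

definition Sub :: "'g::group_add set set" where
  "Sub = {L. is_subgroup L}"

text \<open>Topology of pointwise convergence of indicator functions: pull back the
product topology on bool^Gamma (bool discrete) along L maps to its indicator.\<close>
definition Sub_top :: "'g::group_add set topology" where
  "Sub_top = pullback_topology Sub (\<lambda>L g. g \<in> L)
              (product_topology (\<lambda>_. discrete_topology (UNIV :: bool set)) UNIV)"

definition conj :: "'g::group_add \<Rightarrow> 'g set \<Rightarrow> 'g set" where
  "conj \<gamma> L = (\<lambda>l. \<gamma> + l + - \<gamma>) ` L"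

definition lcoset :: "'g::group_add \<Rightarrow> 'g set \<Rightarrow> 'g set" where
  "lcoset \<gamma> L = (\<lambda>l. \<gamma> + l) ` L"

definition cosets :: "'g::group_add set \<Rightarrow> 'g set set" where
  "cosets L = {lcoset \<gamma> L | \<gamma>. True}"

definition is_URS :: "'g::group_add set set \<Rightarrow> bool" where
  "is_URS Z \<longleftrightarrow> Z \<noteq> {} \<and> Z \<subseteq> Sub \<and> closedin Sub_top Z
     \<and> (\<forall>\<gamma>. \<forall>L\<in>Z. conj \<gamma> L \<in> Z)
     \<and> (\<forall>L\<in>Z. Z \<subseteq> Sub_top closure_of {conj \<gamma> L | \<gamma>. True})"

definition word_length :: "'g::group_add set \<Rightarrow> 'g \<Rightarrow> nat" where
  "word_length Q \<gamma> = (LEAST n. \<exists>xs. length xs = n \<and> set xs \<subseteq> Q \<and> sum_list xs = \<gamma>)"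

definition sch_edges :: "'g::group_add set \<Rightarrow> 'g set \<Rightarrow> ('g set \<times> 'g \<times> 'g set) set" where
  "sch_edges Q L = {(lcoset \<gamma> L, q, lcoset (q + \<gamma>) L) | \<gamma> q. q \<in> Q}"

definition sch_adj :: "'g::group_add set \<Rightarrow> 'g set \<Rightarrow> ('g set \<times> 'g set) set" where
  "sch_adj Q L = {(c, d). \<exists>q. (c, q, d) \<in> sch_edges Q L \<or> (d, q, c) \<in> sch_edges Q L}"

definition sch_ball :: "'g::group_add set \<Rightarrow> 'g set \<Rightarrow> nat \<Rightarrow> 'g set set" where
  "sch_ball Q L N = {c. \<exists>n\<le>N. (L, c) \<in> (sch_adj Q L) ^^ n}"

definition ball_iso :: "'g::group_add set \<Rightarrow> nat \<Rightarrow> 'g set \<Rightarrow> 'g set \<Rightarrow> bool" where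
  "ball_iso Q N L L' \<longleftrightarrow> (\<exists>f. bij_betw f (sch_ball Q L N) (sch_ball Q L' N) \<and> f L = L' \<and>
     (\<forall>c\<in>sch_ball Q L N. \<forall>d\<in>sch_ball Q L N. \<forall>q.
        (c, q, d) \<in> sch_edges Q L \<longleftrightarrow> (f c, q, f d) \<in> sch_edges Q L'))"

definition TG_r :: "'g::group_add set \<times> 'g \<Rightarrow> 'g set" where
  "TG_r x = fst x"
definition TG_s :: "'g::group_add set \<times> 'g \<Rightarrow> 'g set" where
  "TG_s x = conj (snd x) (fst x)"
definition TG_mult :: "'g::group_add set \<times> 'g \<Rightarrow> 'g set \<times> 'g \<Rightarrow> 'g set \<times> 'g" where
  "TG_mult x y = (fst x, snd y + snd x)"
definition TG_inv :: "'g::group_add set \<times> 'g \<Rightarrow> 'g set \<times> 'g" where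
  "TG_inv x = (conj (snd x) (fst x), - snd x)"

definition TG_top :: "'g::group_add set set \<Rightarrow> ('g set \<times> 'g) topology" where
  "TG_top Z = prod_topology (subtopology Sub_top Z) (discrete_topology UNIV)"

text \<open>The groupoid G.  Operations are defined via a choice of coset
representative (they are independent of the choice).\<close>
definition GG :: "'g::group_add set set \<Rightarrow> ('g set \<times> 'g set) set" where
  "GG Z = {(L, c). L \<in> Z \<and> c \<in> cosets L}"

definition rep :: "'g::group_add set \<Rightarrow> 'g set \<Rightarrow> 'g" where
  "rep L c = (SOME \<gamma>. c = lcoset \<gamma> L)"

definition G_r :: "'g::group_add set \<times> 'g set \<Rightarrow> 'g set" where
  "G_r x = fst x"
definition G_s :: "'g::group_add set \<times> 'g set \<Rightarrow> 'g set" where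
  "G_s x = conj (rep (fst x) (snd x)) (fst x)"
definition G_mult :: "'g::group_add set \<times> 'g set \<Rightarrow> 'g set \<times> 'g set \<Rightarrow> 'g set \<times> 'g set" where
  "G_mult x y = (fst x, lcoset (rep (fst y) (snd y) + rep (fst x) (snd x)) (fst x))"
definition G_inv :: "'g::group_add set \<times> 'g set \<Rightarrow> 'g set \<times> 'g set" where
  "G_inv x = (let \<gamma> = rep (fst x) (snd x) in (conj \<gamma> (fst x), lcoset (- \<gamma>) (conj \<gamma> (fst x))))"

definition U_basic :: "'g::group_add set \<Rightarrow> 'g set set \<Rightarrow> 'g set \<Rightarrow> nat \<Rightarrow> 'g \<Rightarrow> ('g set \<times> 'g set) set" where
  "U_basic Q Z L N \<gamma> = {(L', lcoset \<gamma> L') | L'. L' \<in> Z \<and> ball_iso Q N L L'}"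

definition G_top :: "'g::group_add set \<Rightarrow> 'g set set \<Rightarrow> ('g set \<times> 'g set) topology" where
  "G_top Q Z = topology_generated_by
     {U_basic Q Z L N \<gamma> | L N \<gamma>. L \<in> Z \<and> word_length Q \<gamma> \<le> N}"

definition qmap :: "'g::group_add set \<times> 'g \<Rightarrow> 'g set \<times> 'g set" where
  "qmap x = (fst x, lcoset (snd x) (fst x))"

end

theory Submission
  imports Defs
begin


declare add_uminus_conv_diff[simp del]

lemma lcoset_0[simp]: "lcoset 0 L = L"
  by (simp add: lcoset_def)

lemma lcoset_lcoset[simp]: "lcoset a (lcoset b L) = lcoset (a + b) L"
  by (simp add: lcoset_def image_image add.assoc)

lemma sub_0: "L \<in> Sub \<Longrightarrow> 0 \<in> L"
  by (simp add: Sub_def is_subgroup_def)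
lemma sub_add: "L \<in> Sub \<Longrightarrow> x \<in> L \<Longrightarrow> y \<in> L \<Longrightarrow> x + y \<in> L"
  by (simp add: Sub_def is_subgroup_def)
lemma sub_minus: "L \<in> Sub \<Longrightarrow> x \<in> L \<Longrightarrow> - x \<in> L"
  by (simp add: Sub_def is_subgroup_def)

lemma lcoset_eq_self: "L \<in> Sub \<Longrightarrow> lcoset g L = L \<longleftrightarrow> g \<in> L"
proof
  assume L: "L \<in> Sub" and e: "lcoset g L = L"
  have "g + 0 \<in> lcoset g L" using sub_0[OF L] unfolding lcoset_def by (rule imageI)
  then show "g \<in> L" using e by simp
next
  assume L: "L \<in> Sub" and g: "g \<in> L"
  show "lcoset g L = L"
  proof
    show "lcoset g L \<subseteq> L" using L g by (auto simp: lcoset_def intro: sub_add)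
    show "L \<subseteq> lcoset g L"
    proof
      fix x assume "x \<in> L"
      then have "-g + x \<in> L" using L g by (auto intro: sub_add sub_minus)
      moreover have "x = g + (-g + x)" by (simp add: add.assoc[symmetric])
      ultimately show "x \<in> lcoset g L" unfolding lcoset_def by blast
    qed
  qed
qed

lemma lcoset_eq: "L \<in> Sub \<Longrightarrow> lcoset a L = lcoset b L \<longleftrightarrow> -b + a \<in> L"
proof -
  assume L: "L \<in> Sub"
  have "lcoset a L = lcoset b L \<longleftrightarrow> lcoset (-b) (lcoset a L) = lcoset (-b) (lcoset b L)"
    by (metis lcoset_lcoset lcoset_0 add.assoc[symmetric] add.left_inverse add_0 add.right_inverse)
  also have "\<dots> \<longleftrightarrow> lcoset (-b + a) L = L" by simp
  also have "\<dots> \<longleftrightarrow> -b + a \<in> L" using lcoset_eq_self[OF L] .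
  finally show ?thesis .
qed

lemma conj_conj: "conj a (conj b L) = conj (a + b) L"
  by (simp add: conj_def image_image add.assoc minus_add)

lemma conj_self: "L \<in> Sub \<Longrightarrow> l \<in> L \<Longrightarrow> conj l L = L"
proof
  assume L: "L \<in> Sub" and l: "l \<in> L"
  show "conj l L \<subseteq> L" using L l by (auto simp: conj_def intro!: sub_add sub_minus)
  show "L \<subseteq> conj l L"
  proof
    fix x assume "x \<in> L"
    then have "-l + x + l \<in> L" using L l by (auto intro!: sub_add sub_minus)
    moreover have "x = l + (-l + x + l) + - l" by (simp add: add.assoc)
    ultimately show "x \<in> conj l L" unfolding conj_def by blast
  qed
qed

lemma conj_cong: "L \<in> Sub \<Longrightarrow> lcoset a L = lcoset b L \<Longrightarrow> conj a L = conj b L"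
proof -
  assume L: "L \<in> Sub" and e: "lcoset a L = lcoset b L"
  then have l: "-b + a \<in> L" by (simp add: lcoset_eq)
  have "conj a L = conj (b + (-b + a)) L" by (simp add: add.assoc[symmetric])
  also have "\<dots> = conj b (conj (-b + a) L)" by (simp add: conj_conj)
  also have "\<dots> = conj b L" using conj_self[OF L l] by simp
  finally show ?thesis .
qed

lemma rep_spec: "lcoset (rep L (lcoset g L)) L = lcoset g L"
  unfolding rep_def by (rule someI_ex[where P="\<lambda>x. lcoset g L = lcoset x L", THEN sym]) blast

lemma lcoset_via_conj: "lcoset g L = (\<lambda>x. x + g) ` conj g L"
  by (simp add: lcoset_def conj_def image_image add.assoc)

lemma lcoset_image_right: "lcoset a ((\<lambda>x. x + g) ` M) = (\<lambda>x. x + g) ` lcoset a M"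
  by (simp add: lcoset_def image_image add.assoc)

lemma uminus_sub: "L \<in> Sub \<Longrightarrow> uminus ` L = L"
  using sub_minus by (auto simp: image_iff) (metis minus_minus sub_minus)

lemma lcoset_minus_conj: "L \<in> Sub \<Longrightarrow> lcoset (-a) (conj a L) = uminus ` (lcoset a L)"
proof -
  assume L: "L \<in> Sub"
  have "lcoset (-a) (conj a L) = (\<lambda>x. x + - a) ` L"
    by (simp add: lcoset_def conj_def image_image add.assoc[symmetric])
  also have "\<dots> = (\<lambda>x. x + - a) ` (uminus ` L)" using uminus_sub[OF L] by simp
  also have "\<dots> = uminus ` (lcoset a L)"
    by (simp add: lcoset_def image_image minus_add)
  finally show ?thesis .
qed

definition wS :: "'g::group_add set \<Rightarrow> nat \<Rightarrow> 'g set" where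
  "wS Q M = {sum_list ys | ys. set ys \<subseteq> Q \<and> length ys \<le> M}"

lemma wS_mono: "M \<le> M' \<Longrightarrow> a \<in> wS Q M \<Longrightarrow> a \<in> wS Q M'"
  unfolding wS_def by fastforce

lemma wS_add: "a \<in> wS Q m \<Longrightarrow> b \<in> wS Q n \<Longrightarrow> a + b \<in> wS Q (m + n)"
  unfolding wS_def
  by clarify (rule_tac x="ys @ ysa" in exI, auto)

lemma minus_sum_list: "- sum_list (ys::'g::group_add list) = sum_list (rev (map uminus ys))"
  by (induction ys) (auto simp: minus_add)

lemma wS_minus: "\<forall>q\<in>Q. - q \<in> Q \<Longrightarrow> a \<in> wS Q m \<Longrightarrow> - a \<in> wS Q m"
  unfolding wS_def
  by clarify (rule_tac x="rev (map uminus ys)" in exI, auto simp: minus_sum_list)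

lemma wS_0: "0 \<in> wS Q M"
proof -
  have "0 = sum_list [] \<and> set [] \<subseteq> Q \<and> length [] \<le> M" by simp
  then show ?thesis unfolding wS_def by blast
qed

lemma wS_Q: "q \<in> Q \<Longrightarrow> q \<in> wS Q 1"
proof -
  assume "q \<in> Q"
  then have "q = sum_list [q] \<and> set [q] \<subseteq> Q \<and> length [q] \<le> 1" by simp
  then show ?thesis unfolding wS_def by blast
qed

lemma finite_wS: "finite Q \<Longrightarrow> finite (wS Q M)"
proof -
  assume "finite Q"
  then have "finite {ys. set ys \<subseteq> Q \<and> length ys \<le> M}" by (rule finite_lists_length_le)
  moreover have "wS Q M = sum_list ` {ys. set ys \<subseteq> Q \<and> length ys \<le> M}"
    unfolding wS_def by auto
  ultimately show ?thesis by simp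
qed

lemma wl_wS: "\<forall>g. \<exists>xs. set xs \<subseteq> Q \<and> sum_list xs = g \<Longrightarrow> g \<in> wS Q (word_length Q g)"
proof -
  assume gen: "\<forall>g. \<exists>xs. set xs \<subseteq> Q \<and> sum_list xs = g"
  then obtain xs where "set xs \<subseteq> Q" "sum_list xs = g" by blast
  then have "\<exists>n xs. length xs = n \<and> set xs \<subseteq> Q \<and> sum_list xs = g" by blast
  then have "\<exists>xs. length xs = word_length Q g \<and> set xs \<subseteq> Q \<and> sum_list xs = g"
    unfolding word_length_def by (rule LeastI_ex)
  then show ?thesis unfolding wS_def by fastforce
qed

lemma sch_edges_iff: "(c, q, d) \<in> sch_edges Q L \<longleftrightarrow> q \<in> Q \<and> (\<exists>\<gamma>. c = lcoset \<gamma> L) \<and> d = lcoset q c"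
  unfolding sch_edges_def by auto

lemma path_adj: "set ys \<subseteq> Q \<Longrightarrow> (L, lcoset (sum_list ys) L) \<in> (sch_adj Q L) ^^ (length ys)"
proof (induction ys)
  case Nil then show ?case by simp
next
  case (Cons x ys)
  have "(lcoset (sum_list ys) L, x, lcoset x (lcoset (sum_list ys) L)) \<in> sch_edges Q L"
    using Cons.prems by (auto simp: sch_edges_iff)
  then have "(lcoset (sum_list ys) L, lcoset (sum_list (x # ys)) L) \<in> sch_adj Q L"
    unfolding sch_adj_def by auto
  with Cons show ?case by (auto intro: relpow_Suc_I)
qed

lemma adj_path: "\<forall>q\<in>Q. - q \<in> Q \<Longrightarrow> (L, c) \<in> (sch_adj Q L) ^^ n \<Longrightarrow>
   \<exists>ys. set ys \<subseteq> Q \<and> length ys = n \<and> c = lcoset (sum_list ys) L"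
proof (induction n arbitrary: c)
  case 0 then show ?case by (rule_tac x="[]" in exI) auto
next
  case (Suc n)
  from Suc.prems(2) obtain b where b: "(L, b) \<in> (sch_adj Q L) ^^ n" "(b, c) \<in> sch_adj Q L"
    by (rule relpow_Suc_E)
  from Suc.IH[OF Suc.prems(1) b(1)] obtain ys where ys: "set ys \<subseteq> Q" "length ys = n" "b = lcoset (sum_list ys) L"
    by blast
  from b(2) obtain q where "(b, q, c) \<in> sch_edges Q L \<or> (c, q, b) \<in> sch_edges Q L"
    unfolding sch_adj_def by auto
  then show ?case
  proof
    assume "(b, q, c) \<in> sch_edges Q L"
    then have "q \<in> Q" "c = lcoset q b" by (auto simp: sch_edges_iff)
    then have "set (q # ys) \<subseteq> Q \<and> length (q # ys) = Suc n \<and> c = lcoset (sum_list (q # ys)) L"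
      using ys by simp
    then show ?thesis by blast
  next
    assume "(c, q, b) \<in> sch_edges Q L"
    then have "q \<in> Q" "b = lcoset q c" by (auto simp: sch_edges_iff)
    moreover have "lcoset (-q) (lcoset q c) = c" by simp
    ultimately have "-q \<in> Q" "c = lcoset (-q) b" using Suc.prems(1) by auto
    then have "set ((-q) # ys) \<subseteq> Q \<and> length ((-q) # ys) = Suc n \<and> c = lcoset (sum_list ((-q) # ys)) L"
      using ys by simp
    then show ?thesis by blast
  qed
qed

lemma ball_char: "\<forall>q\<in>Q. - q \<in> Q \<Longrightarrow> sch_ball Q L N = (\<lambda>\<gamma>. lcoset \<gamma> L) ` wS Q N"
proof -
  assume sym: "\<forall>q\<in>Q. - q \<in> Q"
  show ?thesis
  proof
    show "sch_ball Q L N \<subseteq> (\<lambda>\<gamma>. lcoset \<gamma> L) ` wS Q N"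
    proof
      fix c assume "c \<in> sch_ball Q L N"
      then obtain n where n: "n \<le> N" "(L, c) \<in> (sch_adj Q L) ^^ n" unfolding sch_ball_def by blast
      from adj_path[OF sym n(2)] obtain ys where ys: "set ys \<subseteq> Q" "length ys = n" "c = lcoset (sum_list ys) L"
        by blast
      have "sum_list ys \<in> wS Q N" unfolding wS_def using ys n by auto
      then show "c \<in> (\<lambda>\<gamma>. lcoset \<gamma> L) ` wS Q N" using ys by blast
    qed
    show "(\<lambda>\<gamma>. lcoset \<gamma> L) ` wS Q N \<subseteq> sch_ball Q L N"
    proof
      fix c assume "c \<in> (\<lambda>\<gamma>. lcoset \<gamma> L) ` wS Q N"
      then obtain ys where ys: "set ys \<subseteq> Q" "length ys \<le> N" "c = lcoset (sum_list ys) L"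
        unfolding wS_def by blast
      from path_adj[OF ys(1), of L] ys show "c \<in> sch_ball Q L N" unfolding sch_ball_def by blast
    qed
  qed
qed

lemma sum_list_wS: "set ys \<subseteq> Q \<Longrightarrow> length ys \<le> N \<Longrightarrow> sum_list ys \<in> wS Q N"
  unfolding wS_def by blast

lemma in_ball: "\<forall>q\<in>Q. - q \<in> Q \<Longrightarrow> g \<in> wS Q N \<Longrightarrow> lcoset g L \<in> sch_ball Q L N"
  using ball_char by (metis image_eqI)

lemma iso_map:
  assumes sym: "\<forall>q\<in>Q. - q \<in> Q"
    and f: "bij_betw f (sch_ball Q L N) (sch_ball Q L' N)" "f L = L'"
      "\<forall>c\<in>sch_ball Q L N. \<forall>d\<in>sch_ball Q L N. \<forall>q.
        (c, q, d) \<in> sch_edges Q L \<longleftrightarrow> (f c, q, f d) \<in> sch_edges Q L'"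
  shows "set ys \<subseteq> Q \<Longrightarrow> length ys \<le> N \<Longrightarrow> f (lcoset (sum_list ys) L) = lcoset (sum_list ys) L'"
proof (induction ys)
  case Nil then show ?case using f by simp
next
  case (Cons x ys)
  let ?c = "lcoset (sum_list ys) L"
  let ?d = "lcoset (sum_list (x # ys)) L"
  have cb: "?c \<in> sch_ball Q L N" using Cons.prems by (intro in_ball[OF sym] sum_list_wS) auto
  have db: "?d \<in> sch_ball Q L N" using Cons.prems by (intro in_ball[OF sym] sum_list_wS) auto
  have "(?c, x, ?d) \<in> sch_edges Q L" using Cons.prems by (auto simp: sch_edges_iff)
  then have "(f ?c, x, f ?d) \<in> sch_edges Q L'" using f(3) cb db by blast
  then have "f ?d = lcoset x (f ?c)" by (simp add: sch_edges_iff)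
  also have "\<dots> = lcoset x (lcoset (sum_list ys) L')" using Cons by simp
  finally show ?case by simp
qed

lemma ball_iso_agree:
  assumes sym: "\<forall>q\<in>Q. - q \<in> Q" and L: "L \<in> Sub" and L': "L' \<in> Sub"
    and iso: "ball_iso Q N L L'" and g: "g \<in> wS Q N"
  shows "g \<in> L \<longleftrightarrow> g \<in> L'"
proof -
  from iso obtain f where f: "bij_betw f (sch_ball Q L N) (sch_ball Q L' N)" "f L = L'"
      "\<forall>c\<in>sch_ball Q L N. \<forall>d\<in>sch_ball Q L N. \<forall>q.
        (c, q, d) \<in> sch_edges Q L \<longleftrightarrow> (f c, q, f d) \<in> sch_edges Q L'"
    unfolding ball_iso_def by blast
  from g obtain ys where ys: "set ys \<subseteq> Q" "length ys \<le> N" "g = sum_list ys" unfolding wS_def by blast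
  have fg: "f (lcoset g L) = lcoset g L'" using iso_map[OF sym f ys(1,2)] ys(3) by simp
  have gb: "lcoset g L \<in> sch_ball Q L N" using g by (rule in_ball[OF sym])
  have rb: "L \<in> sch_ball Q L N" using in_ball[OF sym wS_0, of L N] by simp
  have "g \<in> L \<longleftrightarrow> lcoset g L = L" using lcoset_eq_self[OF L] by simp
  also have "\<dots> \<longleftrightarrow> f (lcoset g L) = f L"
    using f(1) gb rb unfolding bij_betw_def by (metis inj_onD)
  also have "\<dots> \<longleftrightarrow> lcoset g L' = L'" using fg f(2) by simp
  also have "\<dots> \<longleftrightarrow> g \<in> L'" using lcoset_eq_self[OF L'] by simp
  finally show ?thesis .
qed

lemma ball_iso_refl: "ball_iso Q N L L"
  unfolding ball_iso_def by (rule exI[of _ id]) auto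

lemma ball_iso_trans:
  assumes "ball_iso Q N L1 L2" "ball_iso Q N L2 L3" shows "ball_iso Q N L1 L3"
proof -
  from assms(1) obtain f where f: "bij_betw f (sch_ball Q L1 N) (sch_ball Q L2 N)" "f L1 = L2"
      "\<forall>c\<in>sch_ball Q L1 N. \<forall>d\<in>sch_ball Q L1 N. \<forall>q.
        (c, q, d) \<in> sch_edges Q L1 \<longleftrightarrow> (f c, q, f d) \<in> sch_edges Q L2"
    unfolding ball_iso_def by blast
  from assms(2) obtain g where g: "bij_betw g (sch_ball Q L2 N) (sch_ball Q L3 N)" "g L2 = L3"
      "\<forall>c\<in>sch_ball Q L2 N. \<forall>d\<in>sch_ball Q L2 N. \<forall>q.
        (c, q, d) \<in> sch_edges Q L2 \<longleftrightarrow> (g c, q, g d) \<in> sch_edges Q L3"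
    unfolding ball_iso_def by blast
  have "bij_betw (g \<circ> f) (sch_ball Q L1 N) (sch_ball Q L3 N)" using f(1) g(1) by (rule bij_betw_trans)
  moreover have "(g \<circ> f) L1 = L3" using f(2) g(2) by simp
  moreover have "\<forall>c\<in>sch_ball Q L1 N. \<forall>d\<in>sch_ball Q L1 N. \<forall>q.
        (c, q, d) \<in> sch_edges Q L1 \<longleftrightarrow> ((g \<circ> f) c, q, (g \<circ> f) d) \<in> sch_edges Q L3"
  proof (intro ballI allI)
    fix c d q assume c: "c \<in> sch_ball Q L1 N" and d: "d \<in> sch_ball Q L1 N"
    have "f c \<in> sch_ball Q L2 N" "f d \<in> sch_ball Q L2 N" using f(1) c d by (auto dest: bij_betwE)
    then show "(c, q, d) \<in> sch_edges Q L1 \<longleftrightarrow> ((g \<circ> f) c, q, (g \<circ> f) d) \<in> sch_edges Q L3"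
      using f(3) g(3) c d by simp
  qed
  ultimately show ?thesis unfolding ball_iso_def by blast
qed

lemma ball_iso_cyl:
  assumes sym: "\<forall>q\<in>Q. - q \<in> Q" and L1: "L1 \<in> Sub" and L2: "L2 \<in> Sub"
    and agree: "\<forall>g\<in>wS Q (2 * N + 1). g \<in> L1 \<longleftrightarrow> g \<in> L2"
  shows "ball_iso Q N L1 L2"
proof -
  define r where "r c = (SOME \<gamma>. \<gamma> \<in> wS Q N \<and> c = lcoset \<gamma> L1)" for c
  define h where "h c = lcoset (r c) L2" for c
  have eq12: "lcoset a L1 = lcoset b L1 \<longleftrightarrow> lcoset a L2 = lcoset b L2"
    if "a \<in> wS Q N" "b \<in> wS Q N" for a b
  proof -
    have "-b + a \<in> wS Q (N + N)" using that by (intro wS_add wS_minus[OF sym])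
    then have "-b + a \<in> wS Q (2 * N + 1)" by (rule wS_mono[rotated]) simp
    then show ?thesis using agree lcoset_eq[OF L1] lcoset_eq[OF L2] by simp
  qed
  have hg: "h (lcoset g L1) = lcoset g L2" if g: "g \<in> wS Q N" for g
  proof -
    have "\<exists>\<gamma>. \<gamma> \<in> wS Q N \<and> lcoset g L1 = lcoset \<gamma> L1" using g by blast
    then have "r (lcoset g L1) \<in> wS Q N \<and> lcoset g L1 = lcoset (r (lcoset g L1)) L1"
      unfolding r_def by (rule someI_ex)
    then show ?thesis unfolding h_def using eq12 g by metis
  qed
  have B1: "sch_ball Q L1 N = (\<lambda>\<gamma>. lcoset \<gamma> L1) ` wS Q N" by (rule ball_char[OF sym])
  have B2: "sch_ball Q L2 N = (\<lambda>\<gamma>. lcoset \<gamma> L2) ` wS Q N" by (rule ball_char[OF sym])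
  have "bij_betw h (sch_ball Q L1 N) (sch_ball Q L2 N)"
    unfolding bij_betw_def
  proof
    show "inj_on h (sch_ball Q L1 N)"
      unfolding B1 inj_on_def using hg eq12 by auto
    show "h ` sch_ball Q L1 N = sch_ball Q L2 N"
      unfolding B1 B2 image_image using hg by auto
  qed
  moreover have "h L1 = L2" using hg[OF wS_0] by simp
  moreover have "\<forall>c\<in>sch_ball Q L1 N. \<forall>d\<in>sch_ball Q L1 N. \<forall>q.
        (c, q, d) \<in> sch_edges Q L1 \<longleftrightarrow> (h c, q, h d) \<in> sch_edges Q L2"
  proof (intro ballI allI)
    fix c d q assume "c \<in> sch_ball Q L1 N" "d \<in> sch_ball Q L1 N"
    then obtain a b where a: "a \<in> wS Q N" "c = lcoset a L1" and b: "b \<in> wS Q N" "d = lcoset b L1"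
      unfolding B1 by blast
    show "(c, q, d) \<in> sch_edges Q L1 \<longleftrightarrow> (h c, q, h d) \<in> sch_edges Q L2"
    proof (cases "q \<in> Q")
      case False then show ?thesis by (simp add: sch_edges_iff)
    next
      case True
      have "-a + -q \<in> wS Q (N + 1)"
        using a True by (intro wS_add wS_minus[OF sym] wS_Q) auto
      then have "(-a + -q) + b \<in> wS Q (N + 1 + N)" using b(1) by (rule wS_add)
      then have "-(q + a) + b \<in> wS Q (N + 1 + N)" by (simp add: minus_add)
      then have m: "-(q + a) + b \<in> wS Q (2 * N + 1)" by (rule wS_mono[rotated]) simp
      have "(c, q, d) \<in> sch_edges Q L1 \<longleftrightarrow> lcoset b L1 = lcoset (q + a) L1"
        using a b True by (auto simp: sch_edges_iff)
      also have "\<dots> \<longleftrightarrow> lcoset b L2 = lcoset (q + a) L2"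
        using m agree lcoset_eq[OF L1] lcoset_eq[OF L2] by simp
      also have "\<dots> \<longleftrightarrow> (h c, q, h d) \<in> sch_edges Q L2"
        using a b True hg by (auto simp: sch_edges_iff)
      finally show ?thesis .
    qed
  qed
  ultimately show ?thesis unfolding ball_iso_def by blast
qed



definition cyl :: "'g::group_add set \<Rightarrow> 'g set \<Rightarrow> 'g set set" where
  "cyl F L0 = {L \<in> Sub. \<forall>g\<in>F. g \<in> L \<longleftrightarrow> g \<in> L0}"

lemma topspace_Sub_top: "topspace Sub_top = Sub"
  unfolding Sub_top_def by (simp add: topspace_pullback_topology)

lemma cyl_open: "finite F \<Longrightarrow> openin Sub_top (cyl F L0)"
proof -
  assume F: "finite F"
  define X where "X g = (if g \<in> F then {(g \<in> L0)} else (UNIV :: bool set))" for g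
  have o: "openin (product_topology (\<lambda>_. discrete_topology (UNIV :: bool set)) UNIV) (PiE UNIV X)"
    unfolding openin_PiE_gen
  proof (rule disjI2, intro conjI ballI)
    show "finite {i \<in> UNIV. X i \<noteq> topspace (discrete_topology UNIV)}"
      using F by (rule rev_finite_subset) (auto simp: X_def)
  qed simp
  have "cyl F L0 = (\<lambda>L g. g \<in> L) -` PiE UNIV X \<inter> Sub"
  proof (intro set_eqI iffI)
    fix L assume "L \<in> cyl F L0"
    then show "L \<in> (\<lambda>L g. g \<in> L) -` PiE UNIV X \<inter> Sub"
      unfolding cyl_def X_def by (auto simp: PiE_iff)
  next
    fix L assume L: "L \<in> (\<lambda>L g. g \<in> L) -` PiE UNIV X \<inter> Sub"
    have "\<forall>g\<in>F. g \<in> L \<longleftrightarrow> g \<in> L0"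
    proof
      fix g assume g: "g \<in> F"
      have "(g \<in> L) \<in> X g" using L by (simp add: PiE_iff)
      then show "g \<in> L \<longleftrightarrow> g \<in> L0" using g by (simp add: X_def)
    qed
    then show "L \<in> cyl F L0" using L by (simp add: cyl_def)
  qed
  then show ?thesis unfolding Sub_top_def openin_pullback_topology using o by blast
qed

lemma open_cyl_inside:
  assumes "openin Sub_top W" "L0 \<in> W"
  shows "\<exists>F. finite F \<and> cyl F L0 \<subseteq> W"
proof -
  from assms(1) obtain V where V: "openin (product_topology (\<lambda>_. discrete_topology (UNIV :: bool set)) UNIV) V"
      "W = (\<lambda>L g. g \<in> L) -` V \<inter> Sub"
    unfolding Sub_top_def openin_pullback_topology by blast
  have "(\<lambda>g. g \<in> L0) \<in> V" using assms(2) V(2) by blast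
  from product_topology_open_contains_basis[OF V(1) this] obtain X where
    X: "(\<lambda>g. g \<in> L0) \<in> (\<Pi>\<^sub>E i\<in>UNIV. X i)" "finite {i. X i \<noteq> topspace (discrete_topology (UNIV :: bool set))}"
      "(\<Pi>\<^sub>E i\<in>UNIV. X i) \<subseteq> V"
    by blast
  define F where "F = {i. X i \<noteq> UNIV}"
  have "finite F" using X(2) by (simp add: F_def)
  moreover have "cyl F L0 \<subseteq> W"
  proof
    fix L assume L: "L \<in> cyl F L0"
    have "(\<lambda>g. g \<in> L) \<in> (\<Pi>\<^sub>E i\<in>UNIV. X i)"
    proof (simp add: PiE_iff, intro allI)
      fix i show "(i \<in> L) \<in> X i"
      proof (cases "i \<in> F")
        case True then show ?thesis using L X(1) by (simp add: cyl_def PiE_iff)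
      next
        case False then show ?thesis by (simp add: F_def)
      qed
    qed
    then show "L \<in> W" using X(3) V(2) L by (auto simp: cyl_def)
  qed
  ultimately show ?thesis by blast
qed

lemma finite_in_wS:
  assumes gen: "\<forall>g. \<exists>xs. set xs \<subseteq> Q \<and> sum_list xs = g"
  shows "finite F \<Longrightarrow> \<exists>M. F \<subseteq> wS Q M"
proof (induction F rule: finite_induct)
  case empty then show ?case by simp
next
  case (insert x F)
  then obtain M where M: "F \<subseteq> wS Q M" by blast
  have "insert x F \<subseteq> wS Q (max M (word_length Q x))"
    using M wl_wS[OF gen, of x] wS_mono[of M "max M (word_length Q x)"]
      wS_mono[of "word_length Q x" "max M (word_length Q x)"] by auto
  then show ?case by blast
qed

lemma cont_gen:
  assumes "f \<in> topspace X \<rightarrow> \<Union>S" "\<And>b. b \<in> S \<Longrightarrow> openin X {x \<in> topspace X. f x \<in> b}"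
  shows "continuous_map X (topology_generated_by S) f"
  unfolding continuous_map_def
proof (intro conjI allI impI)
  show "f \<in> topspace X \<rightarrow> topspace (topology_generated_by S)" using assms(1) by simp
  fix U assume "openin (topology_generated_by S) U"
  then have "generate_topology_on S U" by (simp add: openin_topology_generated_by_iff)
  then show "openin X {x \<in> topspace X. f x \<in> U}"
  proof (induction rule: generate_topology_on.induct)
    case Empty then show ?case by simp
  next
    case (Int a b)
    have "{x \<in> topspace X. f x \<in> a \<inter> b} = {x \<in> topspace X. f x \<in> a} \<inter> {x \<in> topspace X. f x \<in> b}" by auto
    then show ?case using Int by (simp add: openin_Int)
  next
    case (UN K)
    have "{x \<in> topspace X. f x \<in> \<Union>K} = \<Union>((\<lambda>k. {x \<in> topspace X. f x \<in> k}) ` K)" by auto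
    then show ?case using UN by (auto intro!: openin_Union)
  next
    case (Basis s) then show ?case using assms(2) by simp
  qed
qed

lemma open_gen:
  assumes "\<And>p. p \<in> T \<Longrightarrow> \<exists>b\<in>S. p \<in> b \<and> b \<subseteq> T"
  shows "openin (topology_generated_by S) T"
proof -
  have "T = \<Union>{b \<in> S. b \<subseteq> T}" using assms by blast
  moreover have "generate_topology_on S (\<Union>{b \<in> S. b \<subseteq> T})"
    by (rule generate_topology_on.UN) (auto intro: generate_topology_on.Basis)
  ultimately show ?thesis by (simp add: openin_topology_generated_by_iff)
qed



lemma groupoid_part:
  assumes sub: "Z \<subseteq> Sub"
  shows "(\<forall>x\<in>Z \<times> UNIV. \<forall>y\<in>Z \<times> UNIV. TG_s x = TG_r y \<longrightarrow>
          G_s (qmap x) = G_r (qmap y) \<and> qmap (TG_mult x y) = G_mult (qmap x) (qmap y))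
     \<and> (\<forall>x\<in>Z \<times> UNIV. G_r (qmap x) = TG_r x \<and> G_s (qmap x) = TG_s x
          \<and> qmap (TG_inv x) = G_inv (qmap x))"
proof -
  have Gs: "G_s (qmap (L, g)) = conj g L" if "L \<in> Z" for L g
  proof -
    have "L \<in> Sub" using that sub by blast
    then have "conj (rep L (lcoset g L)) L = conj g L" by (rule conj_cong) (rule rep_spec)
    then show ?thesis unfolding G_s_def qmap_def by simp
  qed
  have part2: "\<forall>x\<in>Z \<times> UNIV. G_r (qmap x) = TG_r x \<and> G_s (qmap x) = TG_s x
          \<and> qmap (TG_inv x) = G_inv (qmap x)"
  proof
    fix x assume x: "x \<in> Z \<times> (UNIV :: 'a set)"
    obtain L g where xe: "x = (L, g)" by (cases x)
    have L: "L \<in> Z" "L \<in> Sub" using x xe sub by auto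
    define g' where "g' = rep L (lcoset g L)"
    have g': "lcoset g' L = lcoset g L" unfolding g'_def by (rule rep_spec)
    have cg: "conj g' L = conj g L" using conj_cong[OF L(2) g'] .
    have "G_inv (qmap x) = (conj g' L, lcoset (- g') (conj g' L))"
      unfolding G_inv_def qmap_def xe g'_def by (simp add: Let_def)
    also have "\<dots> = (conj g L, lcoset (- g) (conj g L))"
      using lcoset_minus_conj[OF L(2), of g'] lcoset_minus_conj[OF L(2), of g] g' cg by simp
    also have "\<dots> = qmap (TG_inv x)" unfolding TG_inv_def qmap_def xe by simp
    finally show "G_r (qmap x) = TG_r x \<and> G_s (qmap x) = TG_s x \<and> qmap (TG_inv x) = G_inv (qmap x)"
      using Gs[OF L(1)] unfolding xe by (simp add: G_r_def TG_r_def TG_s_def qmap_def)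
  qed
  have part1: "\<forall>x\<in>Z \<times> UNIV. \<forall>y\<in>Z \<times> UNIV. TG_s x = TG_r y \<longrightarrow>
          G_s (qmap x) = G_r (qmap y) \<and> qmap (TG_mult x y) = G_mult (qmap x) (qmap y)"
  proof (intro ballI impI)
    fix x y assume x: "x \<in> Z \<times> (UNIV :: 'a set)" and y: "y \<in> Z \<times> (UNIV :: 'a set)"
      and st: "TG_s x = TG_r y"
    obtain L g where xe: "x = (L, g)" by (cases x)
    obtain L' h where ye: "y = (L', h)" by (cases y)
    have L: "L \<in> Z" "L \<in> Sub" using x xe sub by auto
    have L': "L' \<in> Z" "L' \<in> Sub" using y ye sub by auto
    have L'e: "L' = conj g L" using st unfolding xe ye TG_s_def TG_r_def by simp
    define g' where "g' = rep L (lcoset g L)"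
    have g': "lcoset g' L = lcoset g L" unfolding g'_def by (rule rep_spec)
    define h' where "h' = rep L' (lcoset h L')"
    have h': "lcoset h' L' = lcoset h L'" unfolding h'_def by (rule rep_spec)
    have "lcoset (h' + g') L = lcoset h' (lcoset g' L)" by simp
    also have "\<dots> = lcoset h' (lcoset g L)" using g' by simp
    also have "\<dots> = (\<lambda>x. x + g) ` lcoset h' L'"
      unfolding L'e by (simp add: lcoset_via_conj[of g L] lcoset_image_right)
    also have "\<dots> = (\<lambda>x. x + g) ` lcoset h L'" using h' by simp
    also have "\<dots> = lcoset h (lcoset g L)"
      unfolding L'e by (simp add: lcoset_via_conj[of g L] lcoset_image_right)
    also have "\<dots> = lcoset (h + g) L" by simp
    finally have e: "lcoset (h' + g') L = lcoset (h + g) L" .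
    have "G_mult (qmap x) (qmap y) = (L, lcoset (h' + g') L)"
      unfolding G_mult_def qmap_def xe ye g'_def h'_def by simp
    also have "\<dots> = qmap (TG_mult x y)" using e unfolding qmap_def TG_mult_def xe ye by simp
    finally show "G_s (qmap x) = G_r (qmap y) \<and> qmap (TG_mult x y) = G_mult (qmap x) (qmap y)"
      using Gs[OF L(1)] L'e unfolding xe ye by (simp add: G_r_def qmap_def)
  qed
  show ?thesis using part1 part2 by blast
qed



theorem proposition4p1:
  fixes Q :: "'g::group_add set" and Z :: "'g set set"
  assumes "finite Q"
    and "\<forall>q\<in>Q. - q \<in> Q"
    and "\<forall>g. \<exists>xs. set xs \<subseteq> Q \<and> sum_list xs = g"
    and "is_URS Z"
  shows "continuous_map (TG_top Z) (G_top Q Z) qmap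
     \<and> open_map (TG_top Z) (G_top Q Z) qmap
     \<and> qmap ` (Z \<times> UNIV) = GG Z
     \<and> (\<forall>x\<in>Z \<times> UNIV. \<forall>y\<in>Z \<times> UNIV. TG_s x = TG_r y \<longrightarrow>
          G_s (qmap x) = G_r (qmap y) \<and> qmap (TG_mult x y) = G_mult (qmap x) (qmap y))
     \<and> (\<forall>x\<in>Z \<times> UNIV. G_r (qmap x) = TG_r x \<and> G_s (qmap x) = TG_s x
          \<and> qmap (TG_inv x) = G_inv (qmap x))
     \<and> quotient_map (TG_top Z) (G_top Q Z) qmap"
proof -
  note finQ = assms(1) and sym = assms(2) and gen = assms(3)
  have sub: "Z \<subseteq> Sub" using assms(4) by (simp add: is_URS_def)
  define B where "B = {U_basic Q Z L N \<gamma> | L N \<gamma>. L \<in> Z \<and> word_length Q \<gamma> \<le> N}"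
  have Gt: "G_top Q Z = topology_generated_by B" unfolding G_top_def B_def by simp
  have tsX: "topspace (TG_top Z) = Z \<times> UNIV"
    unfolding TG_top_def using sub by (auto simp: topspace_Sub_top)
  have surj: "qmap ` (Z \<times> UNIV) = GG Z"
  proof
    show "qmap ` (Z \<times> UNIV) \<subseteq> GG Z" unfolding GG_def cosets_def qmap_def by auto
    show "GG Z \<subseteq> qmap ` (Z \<times> UNIV)"
    proof
      fix p assume "p \<in> GG Z"
      then obtain L g where "p = (L, lcoset g L)" "L \<in> Z" unfolding GG_def cosets_def by blast
      then have "p = qmap (L, g)" "(L, g) \<in> Z \<times> UNIV" by (auto simp: qmap_def)
      then show "p \<in> qmap ` (Z \<times> UNIV)" by blast
    qed
  qed
  have inB: "qmap x \<in> \<Union>B" if xZ: "x \<in> Z \<times> UNIV" for x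
  proof -
    obtain L g where x: "x = (L, g)" "L \<in> Z" using xZ by (cases x) auto
    have "U_basic Q Z L (word_length Q g) g \<in> B" unfolding B_def using x by blast
    moreover have "qmap x \<in> U_basic Q Z L (word_length Q g) g"
      unfolding U_basic_def qmap_def x using x(2) ball_iso_refl by auto
    ultimately show ?thesis by blast
  qed
  have Bsub: "\<Union>B \<subseteq> qmap ` (Z \<times> UNIV)"
    unfolding B_def U_basic_def qmap_def by (auto simp: image_iff)
  have tsY: "topspace (G_top Q Z) = qmap ` (Z \<times> UNIV)"
    unfolding Gt using inB Bsub by auto
  have cont: "continuous_map (TG_top Z) (G_top Q Z) qmap"
    unfolding Gt
  proof (rule cont_gen)
    show "qmap \<in> topspace (TG_top Z) \<rightarrow> \<Union>B" using inB tsX by auto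
    fix b assume "b \<in> B"
    then obtain L N \<gamma> where b: "b = U_basic Q Z L N \<gamma>" unfolding B_def by blast
    show "openin (TG_top Z) {x \<in> topspace (TG_top Z). qmap x \<in> b}"
      unfolding tsX unfolding TG_top_def openin_prod_topology_alt
    proof (intro allI impI)
      fix L1 \<eta> assume "(L1, \<eta>) \<in> {x \<in> Z \<times> UNIV. qmap x \<in> b}"
      then have L1: "L1 \<in> Z" and "qmap (L1, \<eta>) \<in> U_basic Q Z L N \<gamma>" unfolding b[symmetric] by simp_all
      then have iso: "ball_iso Q N L L1" and ce: "lcoset \<eta> L1 = lcoset \<gamma> L1"
        unfolding U_basic_def qmap_def by auto
      have L1s: "L1 \<in> Sub" using L1 sub by blast
      define F where "F = insert (-\<gamma> + \<eta>) (wS Q (2 * N + 1))"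
      have fF: "finite F" unfolding F_def using finite_wS[OF finQ] by simp
      let ?U = "Z \<inter> cyl F L1"
      have "openin (subtopology Sub_top Z) ?U" by (rule openin_subtopology_Int2[OF cyl_open[OF fF]])
      moreover have "openin (discrete_topology UNIV) {\<eta>}" by simp
      moreover have "L1 \<in> ?U" using L1 L1s by (simp add: cyl_def)
      moreover have "?U \<times> {\<eta>} \<subseteq> {x \<in> Z \<times> UNIV. qmap x \<in> b}"
      proof
        fix p assume "p \<in> ?U \<times> {\<eta>}"
        then obtain L2 where p: "p = (L2, \<eta>)" "L2 \<in> Z" "L2 \<in> cyl F L1" by auto
        have L2s: "L2 \<in> Sub" and ag: "\<forall>g\<in>F. g \<in> L2 \<longleftrightarrow> g \<in> L1" using p(3) by (auto simp: cyl_def)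
        have "ball_iso Q N L1 L2"
          by (rule ball_iso_cyl[OF sym L1s L2s]) (use ag in \<open>auto simp: F_def\<close>)
        then have iso2: "ball_iso Q N L L2" by (rule ball_iso_trans[OF iso])
        have "-\<gamma> + \<eta> \<in> L1" using ce lcoset_eq[OF L1s] by simp
        then have "-\<gamma> + \<eta> \<in> L2" using ag by (simp add: F_def)
        then have "lcoset \<eta> L2 = lcoset \<gamma> L2" using lcoset_eq[OF L2s] by simp
        then have "qmap p \<in> b" unfolding b U_basic_def qmap_def p using p(2) iso2 by auto
        then show "p \<in> {x \<in> Z \<times> UNIV. qmap x \<in> b}" using p by simp
      qed
      ultimately show "\<exists>U V. openin (subtopology Sub_top Z) U \<and> openin (discrete_topology UNIV) V \<and>
          L1 \<in> U \<and> \<eta> \<in> V \<and> U \<times> V \<subseteq> {x \<in> Z \<times> UNIV. qmap x \<in> b}"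
        by blast
    qed
  qed
  have opn: "open_map (TG_top Z) (G_top Q Z) qmap"
    unfolding open_map_def Gt
  proof (intro allI impI open_gen)
    fix U p assume U: "openin (TG_top Z) U" and "p \<in> qmap ` U"
    then obtain L1 \<eta> where p: "p = qmap (L1, \<eta>)" "(L1, \<eta>) \<in> U" by auto
    from U[unfolded TG_top_def openin_prod_topology_alt, rule_format, OF p(2)] obtain W V where WV: "openin (subtopology Sub_top Z) W" "openin (discrete_topology UNIV) V"
      "L1 \<in> W" "\<eta> \<in> V" "W \<times> V \<subseteq> U"
      by blast
    from WV(1) obtain T where T: "openin Sub_top T" "W = T \<inter> Z" unfolding openin_subtopology by blast
    have L1: "L1 \<in> Z" "L1 \<in> T" using WV(3) T(2) by auto
    have L1s: "L1 \<in> Sub" using L1 sub by blast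
    from open_cyl_inside[OF T(1) L1(2)] obtain F where F: "finite F" "cyl F L1 \<subseteq> T" by blast
    from finite_in_wS[OF gen F(1)] obtain M where M: "F \<subseteq> wS Q M" by blast
    define N where "N = max M (word_length Q \<eta>)"
    let ?b = "U_basic Q Z L1 N \<eta>"
    have "word_length Q \<eta> \<le> N" by (simp add: N_def)
    then have "?b \<in> B" unfolding B_def using L1(1) by blast
    moreover have "p \<in> ?b" unfolding p U_basic_def qmap_def using L1 ball_iso_refl by auto
    moreover have "?b \<subseteq> qmap ` U"
    proof
      fix r assume "r \<in> ?b"
      then obtain L2 where r: "r = (L2, lcoset \<eta> L2)" "L2 \<in> Z" "ball_iso Q N L1 L2"
        unfolding U_basic_def by blast
      have L2s: "L2 \<in> Sub" using r(2) sub by blast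
      have "\<forall>g\<in>F. g \<in> L2 \<longleftrightarrow> g \<in> L1"
      proof
        fix g assume "g \<in> F"
        then have "g \<in> wS Q N" using M wS_mono[of M N] by (auto simp: N_def)
        then show "g \<in> L2 \<longleftrightarrow> g \<in> L1" using ball_iso_agree[OF sym L1s L2s r(3)] by simp
      qed
      then have "L2 \<in> cyl F L1" using L2s by (simp add: cyl_def)
      then have "L2 \<in> W" using F(2) T(2) r(2) by auto
      then have "(L2, \<eta>) \<in> U" using WV(4,5) by auto
      moreover have "r = qmap (L2, \<eta>)" using r(1) by (simp add: qmap_def)
      ultimately show "r \<in> qmap ` U" by blast
    qed
    ultimately show "\<exists>b\<in>B. p \<in> b \<and> b \<subseteq> qmap ` U" by blast
  qed
  have quot: "quotient_map (TG_top Z) (G_top Q Z) qmap"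
    by (rule continuous_open_imp_quotient_map[OF cont opn]) (simp add: tsX tsY)
  show ?thesis using cont opn surj quot groupoid_part[OF sub] by blast
qed

end
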